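(* Let $p\neq 3$ be a prime, $a\in\mathbb{Q}_p$ with $|a|_p<1$, and assume $\sqrt{a^2+4}$ exists in $\mathbb{Q}_p$ (automatic for $p\ge 5$; for $p=2$ equivalent to $|a|_2\le 1/8$). Let $f(x)=x^3+ax^2$ on $\mathbb{Q}_p$ and let $x_\sigma$ ($\sigma=2,3$) be one of the fixed points $x_{2,3}=\frac{-a\pm\sqrt{a^2+4}}{2}$. The following conditions are equivalent: (i) $SI(x_\sigma)=B_1(x_\sigma)$; (ii) there is $\gamma_0\in S_1(0)$ such that $|\gamma_0^2+3x_\sigma\gamma_0+3|_p<1$; (iii) $\sqrt{-3}$ exists in $\mathbb{Q}_p$.
   Context: $\mathbb{Q}_p$ is the field of $p$-adic numbers with norm $|\cdot|_p$. $B_r(c)=\{x:|x-c|_p<r\}$, $S_r(c)=\{x:|x-c|_p=r\}$. A ball $B_r(x^{(0)})$ centered at a fixed point $x^{(0)}$ of $f$ is a Siegel disc if for every $\rho<r$ the sphere $S_\rho(x^{(0)})$ is invariant, i.e. $x\in S_\rho(x^{(0)})$ implies $f^{(n)}(x)\in S_\rho(x^{(0)})$ for all $n\ge1$ ($f^{(n)}$ the $n$-th iterate); $SI(x^{(0)})$, the maximal Siegel disc, is the union of all Siegel discs centered at $x^{(0)}$. *)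

theory Defs
  imports Complex_Main "HOL-Computational_Algebra.Primes"
begin

definition padic_abs_rat :: "nat \<Rightarrow> rat \<Rightarrow> real" where
  "padic_abs_rat p q = (if q = 0 then 0 else
     (case quotient_of q of (n, d) \<Rightarrow>
        real p powr (real (multiplicity (int p) d) - real (multiplicity (int p) n))))"

text \<open>A field of characteristic 0 with a function nv is (an isometric copy of) the
  field of p-adic numbers Q_p with its norm: nv is a non-archimedean absolute value
  extending the p-adic absolute value on Q, the field is complete for nv, and Q is dense.
  These properties determine (Q_p, |.|_p) up to isometric isomorphism.\<close>
definition is_Qp :: "nat \<Rightarrow> ('a::field_char_0 \<Rightarrow> real) \<Rightarrow> bool" where
  "is_Qp p nv \<longleftrightarrow>
     (\<forall>x. 0 \<le> nv x) \<and> (\<forall>x. nv x = 0 \<longleftrightarrow> x = 0) \<and>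
     (\<forall>x y. nv (x * y) = nv x * nv y) \<and>
     (\<forall>x y. nv (x + y) \<le> max (nv x) (nv y)) \<and>
     (\<forall>q. nv (of_rat q) = padic_abs_rat p q) \<and>
     (\<forall>X :: nat \<Rightarrow> 'a. (\<forall>e>0. \<exists>N. \<forall>m\<ge>N. \<forall>n\<ge>N. nv (X m - X n) < e) \<longrightarrow>
          (\<exists>L. \<forall>e>0. \<exists>N. \<forall>n\<ge>N. nv (X n - L) < e)) \<and>
     (\<forall>x e. 0 < e \<longrightarrow> (\<exists>q. nv (x - of_rat q) < e))"

definition pball :: "('a::ab_group_add \<Rightarrow> real) \<Rightarrow> real \<Rightarrow> 'a \<Rightarrow> 'a set" where
  "pball nv r c = {x. nv (x - c) < r}"

definition psphere :: "('a::ab_group_add \<Rightarrow> real) \<Rightarrow> real \<Rightarrow> 'a \<Rightarrow> 'a set" where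
  "psphere nv r c = {x. nv (x - c) = r}"

definition siegel_disc :: "('a::ab_group_add \<Rightarrow> real) \<Rightarrow> ('a \<Rightarrow> 'a) \<Rightarrow> 'a \<Rightarrow> real \<Rightarrow> bool" where
  "siegel_disc nv f x0 r \<longleftrightarrow> f x0 = x0 \<and>
     (\<forall>\<rho><r. \<forall>x\<in>psphere nv \<rho> x0. \<forall>n\<ge>1. (f ^^ n) x \<in> psphere nv \<rho> x0)"

definition SI :: "('a::ab_group_add \<Rightarrow> real) \<Rightarrow> ('a \<Rightarrow> 'a) \<Rightarrow> 'a \<Rightarrow> 'a set" where
  "SI nv f x0 = \<Union> {pball nv r x0 | r. siegel_disc nv f x0 r}"

end

theory Submission
  imports Defs
begin

context
  fixes p :: nat and nv :: "'a::field_char_0 \<Rightarrow> real"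
  assumes Q: "is_Qp p nv"
begin

lemma nv_nonneg: "0 \<le> nv x" using Q unfolding is_Qp_def by blast
lemma nv_zero: "nv x = 0 \<longleftrightarrow> x = 0" using Q unfolding is_Qp_def by blast
lemma nv_mult: "nv (x * y) = nv x * nv y" using Q unfolding is_Qp_def by blast
lemma nv_ultra: "nv (x + y) \<le> max (nv x) (nv y)" using Q unfolding is_Qp_def by blast
lemma nv_rat: "nv (of_rat q) = padic_abs_rat p q" using Q unfolding is_Qp_def by blast
lemma nv_complete: fixes X :: "nat \<Rightarrow> 'a" shows "(\<forall>e>0. \<exists>N. \<forall>m\<ge>N. \<forall>n\<ge>N. nv (X m - X n) < e) \<Longrightarrow>
          (\<exists>L. \<forall>e>0. \<exists>N. \<forall>n\<ge>N. nv (X n - L) < e)" using Q unfolding is_Qp_def by blast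
lemma nv_dense: "0 < e \<Longrightarrow> \<exists>q. nv (x - of_rat q) < e" using Q unfolding is_Qp_def by blast

lemma nv_0 [simp]: "nv 0 = 0" using nv_zero by simp

lemma nv_1: "nv 1 = 1"
proof -
  have "nv 1 = nv 1 * nv 1" using nv_mult[of 1 1] by simp
  moreover have "nv 1 \<noteq> 0" using nv_zero by simp
  ultimately show ?thesis by (metis mult_cancel_right2)
qed

lemma nv_minus: "nv (- x) = nv x"
proof -
  have "nv (-1) * nv (-1) = 1" using nv_mult[of "-1" "-1"] nv_1 by simp
  moreover have "nv (-1) \<ge> 0" by (rule nv_nonneg)
  ultimately have "nv (-1) = 1"
    by (metis power2_eq_1_iff power2_eq_square neg_0_le_iff_le zero_le_one zero_neq_one order.antisym)
  then show ?thesis using nv_mult[of "-1" x] by simp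
qed

lemma nv_sym: "nv (x - y) = nv (y - x)"
  using nv_minus[of "x - y"] by simp

lemma nv_power: "nv (x ^ n) = nv x ^ n"
  by (induction n) (simp_all add: nv_1 nv_mult)

lemma nv_divide: "nv (x / y) = nv x / nv y"
proof (cases "y = 0")
  case True then show ?thesis using nv_zero by simp
next
  case False
  have "nv (x / y) * nv y = nv x" using nv_mult[of "x/y" y] False by simp
  moreover have "nv y \<noteq> 0" using False nv_zero by simp
  ultimately show ?thesis by (simp add: field_simps)
qed

lemma nv_add_le: "nv x \<le> c \<Longrightarrow> nv y \<le> c \<Longrightarrow> nv (x + y) \<le> c"
  using nv_ultra[of x y] by linarith

lemma nv_add_less: "nv x < c \<Longrightarrow> nv y < c \<Longrightarrow> nv (x + y) < c"
  using nv_ultra[of x y] by linarith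

lemma nv_diff_le: "nv x \<le> c \<Longrightarrow> nv y \<le> c \<Longrightarrow> nv (x - y) \<le> c"
  using nv_add_le[of x c "-y"] nv_minus[of y] by simp

lemma nv_diff_less: "nv x < c \<Longrightarrow> nv y < c \<Longrightarrow> nv (x - y) < c"
  using nv_add_less[of x c "-y"] nv_minus[of y] by simp

lemma nv_strict: "nv x < nv y \<Longrightarrow> nv (x + y) = nv y"
proof -
  assume a: "nv x < nv y"
  have 1: "nv (x + y) \<le> nv y" using nv_ultra[of x y] a by simp
  have "nv y \<le> max (nv (x + y)) (nv (- x))" using nv_ultra[of "x + y" "-x"] by simp
  then have "nv y \<le> nv (x + y)" using a nv_minus[of x] by (auto simp: max_def split: if_splits)
  then show ?thesis using 1 by simp
qed

lemma nv_strict': "nv y < nv x \<Longrightarrow> nv (x + y) = nv x"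
  using nv_strict[of y x] by (simp add: add.commute)

lemma nv_of_nat_le: "nv (of_nat n) \<le> 1"
  by (induction n) (simp_all add: nv_zero nv_1 nv_add_le)

lemma nv_of_int_le: "nv (of_int n) \<le> 1"
  by (cases "n \<ge> 0") (metis nv_of_nat_le of_int_of_nat_eq nonneg_int_cases,
      metis nv_minus nv_of_nat_le of_int_minus of_int_of_nat_eq nonneg_int_cases neg_0_le_iff_le linear)

lemma nv_int_unit:
  assumes "prime p" "\<not> int p dvd n"
  shows "nv (of_int n) = 1"
proof -
  have n0: "n \<noteq> 0" using assms(2) by auto
  have "nv (of_int n) = nv (of_rat (of_int n))" by simp
  also have "\<dots> = padic_abs_rat p (of_int n)" by (rule nv_rat)
  also have "\<dots> = 1"
    using n0 assms prime_gt_0_nat[OF assms(1)]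
    by (simp add: padic_abs_rat_def not_dvd_imp_multiplicity_0)
  finally show ?thesis .
qed

lemma nv_p:
  assumes "prime p"
  shows "nv (of_nat p) = 1 / real p"
proof -
  have p0: "p > 0" using prime_gt_0_nat[OF assms] .
  have pr: "prime (int p)" using assms by simp
  have m: "multiplicity (int p) (int p) = 1"
    by (rule multiplicity_self) (use pr p0 in \<open>auto dest: prime_elem_not_unit\<close>)
  have "nv (of_nat p) = nv (of_rat (of_nat p))" by simp
  also have "\<dots> = padic_abs_rat p (of_nat p)" by (rule nv_rat)
  also have "\<dots> = real p powr (- 1)"
    using p0 m by (simp add: padic_abs_rat_def)
  also have "\<dots> = 1 / real p" using p0 by (simp add: powr_minus_divide)
  finally show ?thesis .
qed

lemma nv_gap:
  assumes "prime p" "1 < nv x" "nv x < real p"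
  shows False
proof -
  have p1: "real p > 1" using prime_gt_1_nat[OF assms(1)] by simp
  have x0: "x \<noteq> 0" using assms(2) by auto
  then have "nv x > 0" using nv_nonneg[of x] nv_zero[of x] by simp
  then obtain q where q: "nv (x - of_rat q) < nv x" using nv_dense by blast
  have "nv (- (x - of_rat q) + x) = nv x"
    using nv_strict[of "- (x - of_rat q)" x] q nv_minus[of "x - of_rat q"] by simp
  then have eq: "padic_abs_rat p q = nv x" using nv_rat[of q] by simp
  have q0: "q \<noteq> 0" using eq assms(2) by (auto simp: padic_abs_rat_def)
  obtain n d where nd: "quotient_of q = (n, d)" by (cases "quotient_of q")
  define t where "t = real (multiplicity (int p) d) - real (multiplicity (int p) n)"
  have e2: "real p powr t = nv x" using eq q0 nd by (simp add: padic_abs_rat_def t_def)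
  have "real p powr 0 < real p powr t" using e2 assms(2) p1 by simp
  then have t0: "0 < t" using p1 by (rule powr_less_cancel)
  have "real p powr t < real p powr 1" using e2 assms(3) p1 by simp
  then have t1: "t < 1" using p1 by (rule powr_less_cancel)
  from t0 have "multiplicity (int p) d > multiplicity (int p) n" by (simp add: t_def)
  then have "real (multiplicity (int p) d) \<ge> real (multiplicity (int p) n) + 1" by simp
  then show False using t1 by (simp add: t_def)
qed

lemma odd_sq_int: "odd (d::int) \<Longrightarrow> \<exists>t. d * d = 1 + 8 * t"
proof -
  assume "odd d"
  then obtain j where j: "d = 2 * j + 1" by (metis oddE)
  show ?thesis
  proof (cases "even j")
    case True
    then obtain i where "j = 2 * i" by blast
    then show ?thesis using j by (intro exI[of _ "2*i*i + i"]) (simp add: algebra_simps)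
  next
    case False
    then obtain i where "j = 2 * i + 1" by (metis oddE)
    then show ?thesis using j by (intro exI[of _ "2*i*i + 3*i + 1"]) (simp add: algebra_simps)
  qed
qed

lemma nv_two: "p = 2 \<Longrightarrow> nv (2::'a) = 1/2"
  using nv_p by simp

lemma nv_odd2: "p = 2 \<Longrightarrow> odd n \<Longrightarrow> nv (of_int n :: 'a) = 1"
  using nv_int_unit[of n] by simp

lemma nv_even2: "p = 2 \<Longrightarrow> even n \<Longrightarrow> nv (of_int n :: 'a) \<le> 1/2"
proof -
  assume p: "p = 2" and "even n"
  then obtain k where k: "n = 2 * k" by blast
  have "nv (of_int n :: 'a) = nv 2 * nv (of_int k :: 'a)" using k nv_mult by simp
  also have "\<dots> = 1/2 * nv (of_int k :: 'a)" using nv_two[OF p] by simp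
  also have "\<dots> \<le> 1/2" using nv_of_int_le[of k] by simp
  finally show ?thesis .
qed

lemma approx2:
  assumes p: "p = 2" and x: "nv x \<le> 1"
  shows "\<exists>m::int. nv (x - of_int m) \<le> 1/8"
proof -
  obtain q where q: "nv (x - of_rat q) < 1/8" using nv_dense[of "1/8" x] by auto
  have nvq: "nv (of_rat q) \<le> 1"
    using nv_diff_le[of x 1 "x - of_rat q"] x q by simp
  obtain n d where nd: "quotient_of q = (n, d)" by (cases "quotient_of q")
  have d0: "d > 0" using quotient_of_denom_pos[OF nd] .
  have cop: "coprime n d" using quotient_of_coprime[OF nd] .
  have qe: "(of_rat q :: 'a) = of_int n / of_int d"
    using quotient_of_div[OF nd] by (simp add: of_rat_divide)
  have dodd: "odd d"
  proof
    assume ed: "even d"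
    have "odd n"
    proof
      assume "even n"
      then have "is_unit (2::int)" using coprime_common_divisor[OF cop] ed by blast
      then show False by simp
    qed
    then have n1: "nv (of_int n :: 'a) = 1" using nv_odd2[OF p] by simp
    have dle: "nv (of_int d :: 'a) \<le> 1/2" using nv_even2[OF p ed] .
    have dpos: "nv (of_int d :: 'a) > 0" using d0 nv_nonneg[of "of_int d"] nv_zero[of "of_int d"] by auto
    have "nv (of_rat q :: 'a) = 1 / nv (of_int d :: 'a)" using qe nv_divide n1 by simp
    also have "\<dots> \<ge> 2" using dle dpos by (simp add: field_simps)
    finally show False using nvq by simp
  qed
  obtain t where t: "d * d = 1 + 8 * t" using odd_sq_int[OF dodd] by blast
  have tA: "(of_int d :: 'a) * of_int d = 1 + 8 * of_int t"
    using arg_cong[OF t, of "of_int :: int \<Rightarrow> 'a"] by simp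
  have dA: "(of_int d :: 'a) \<noteq> 0" using d0 by simp
  have eq: "x - of_int (n * d) = (x - of_rat q) + (- (8 * of_int n * of_int t / of_int d))"
  proof -
    have "(of_int n / of_int d :: 'a) - of_int n * of_int d = - (8 * of_int n * of_int t / of_int d)"
    proof -
      have "(of_int n / of_int d :: 'a) - of_int n * of_int d
          = (of_int n - of_int n * (of_int d * of_int d)) / of_int d"
        using dA by (simp add: diff_divide_distrib)
      also have "\<dots> = (of_int n - of_int n * (1 + 8 * of_int t)) / of_int d" using tA by simp
      also have "\<dots> = (- (8 * of_int n * of_int t)) / of_int d"
      proof -
        have "(of_int n :: 'a) - of_int n * (1 + 8 * of_int t) = - (8 * of_int n * of_int t)"
          by (simp add: distrib_left)
        then show ?thesis by simp
      qed
      also have "\<dots> = - (8 * of_int n * of_int t / of_int d)"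
        by (rule minus_divide_left[symmetric])
      finally show ?thesis .
    qed
    then show ?thesis using qe by (simp add: algebra_simps)
  qed
  have d1: "nv (of_int d :: 'a) = 1" using nv_odd2[OF p dodd] .
  have n8: "nv (8::'a) = 1/8"
  proof -
    have "(8::'a) = 2 ^ 3" by simp
    then have "nv (8::'a) = nv (2::'a) ^ 3" using nv_power[of 2 3] by simp
    then show ?thesis using nv_two[OF p] by (simp add: power_divide)
  qed
  have "nv (- (8 * of_int n * of_int t / of_int d) :: 'a) = 1/8 * nv (of_int n :: 'a) * nv (of_int t :: 'a)"
    using nv_minus nv_divide nv_mult n8 d1 by simp
  also have "\<dots> \<le> 1/8"
    using nv_of_int_le[of n] nv_of_int_le[of t] nv_nonneg[of "of_int n"] nv_nonneg[of "of_int t"]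
    by (simp add: mult_le_one)
  finally have "nv (- (8 * of_int n * of_int t / of_int d) :: 'a) \<le> 1/8" .
  then have "nv ((x - of_rat q) + (- (8 * of_int n * of_int t / of_int d))) \<le> 1/8"
    using q by (intro nv_add_le) auto
  then have "nv (x - of_int (n * d)) \<le> 1/8" by (subst eq)
  then show ?thesis by blast
qed

lemma newton_step:
  assumes n2: "nv (2::'a) = 1" and n3: "nv (3::'a) = 1" and e: "nv (w^2 + 3) < 1"
  shows "nv w = 1 \<and> nv ((w - (w^2+3)/(2*w))^2 + 3) = nv (w^2+3)^2
         \<and> nv ((w - (w^2+3)/(2*w)) - w) = nv (w^2+3)"
proof -
  have m3: "nv (-3::'a) = 1" using nv_minus n3 by simp
  have "nv ((w^2 + 3) + (-3)) = 1" using nv_strict[of "w^2+3" "-3"] e m3 by simp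
  then have "nv w ^ 2 = 1" using nv_power by simp
  then have w1: "nv w = 1" using nv_nonneg[of w] by (simp add: power2_eq_1_iff)
  then have w0: "w \<noteq> 0" by auto
  define E where "E = w^2 + 3"
  have id: "(w - E/(2*w))^2 + 3 = E^2 / (4 * w^2)"
    using w0 unfolding E_def by (simp add: field_simps power2_eq_square)
  have n4: "nv (4::'a) = 1" using nv_mult[of 2 2] n2 by simp
  have a: "nv ((w - E/(2*w))^2 + 3) = nv E ^ 2"
    unfolding id using nv_divide nv_mult nv_power n4 w1 by simp
  have "(w - E/(2*w)) - w = - (E / (2 * w))" by simp
  then have b: "nv ((w - E/(2*w)) - w) = nv E" using nv_minus nv_divide nv_mult n2 w1 by simp
  show ?thesis using w1 a b unfolding E_def by simp
qed

lemma hensel: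
  assumes n2: "nv (2::'a) = 1" and n3: "nv (3::'a) = 1" and z0: "nv (z0^2 + 3) < 1"
  shows "\<exists>y::'a. y^2 = -3"
proof -
  define t where "t = nv (z0^2+3)"
  have t0: "0 \<le> t" "t < 1" using z0 nv_nonneg unfolding t_def by auto
  define z where "z = rec_nat z0 (\<lambda>_ w. w - (w^2+3)/(2*w))"
  have z_0: "z 0 = z0" by (simp add: z_def)
  have zS: "z (Suc n) = z n - (z n ^2 + 3)/(2 * z n)" for n by (simp add: z_def)
  have P: "nv (z n ^2 + 3) \<le> t ^ Suc n" for n
  proof (induction n)
    case 0 then show ?case by (simp add: z_0 t_def)
  next
    case (Suc n)
    have tn: "t ^ Suc n \<le> t" using t0 power_decreasing[of 1 "Suc n" t] by simp
    have lt: "nv (z n ^2 + 3) < 1" using Suc tn t0 by linarith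
    have "nv (z (Suc n) ^2 + 3) = nv (z n ^2 + 3) ^ 2"
      using newton_step[OF n2 n3 lt] zS by simp
    also have "\<dots> \<le> t ^ Suc n * t"
    proof -
      let ?e = "nv (z n ^2 + 3)"
      have "?e ^ 2 = ?e * ?e" by (rule power2_eq_square)
      moreover have "?e * ?e \<le> t ^ Suc n * t"
        using mult_mono[of ?e "t ^ Suc n" ?e t] Suc tn nv_nonneg[of "z n ^2 + 3"] t0 by simp
      ultimately show ?thesis by simp
    qed
    also have "\<dots> = t ^ Suc (Suc n)" by simp
    finally show ?case .
  qed
  have lt: "nv (z n ^2 + 3) < 1" for n
    using P[of n] t0 power_decreasing[of 1 "Suc n" t] by simp
  have z1: "nv (z n) = 1" for n using newton_step[OF n2 n3 lt[of n]] by simp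
  have D: "nv (z (Suc n) - z n) \<le> t ^ Suc n" for n
    using newton_step[OF n2 n3 lt[of n]] zS P[of n] by simp
  have C: "nv (z m - z n) \<le> t ^ Suc n" if "n \<le> m" for m n
    using that
  proof (induction m rule: dec_induct)
    case base then show ?case using t0 by simp
  next
    case (step m)
    have "t ^ Suc m \<le> t ^ Suc n" using step t0 power_decreasing[of "Suc n" "Suc m" t] by simp
    then have "nv (z (Suc m) - z m) \<le> t ^ Suc n" using D[of m] by simp
    then have "nv ((z (Suc m) - z m) + (z m - z n)) \<le> t ^ Suc n"
      using step by (intro nv_add_le) auto
    then show ?case by simp
  qed
  have arch: "\<exists>N. t ^ Suc N < e" if e0: "e > 0" for e
  proof -
    obtain N where "t ^ N < e" using real_arch_pow_inv[OF e0 t0(2)] by blast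
    moreover have "t ^ Suc N \<le> t ^ N" using t0 power_decreasing[of N "Suc N" t] by simp
    ultimately show ?thesis by (intro exI[of _ N]) simp
  qed
  have cauchy: "\<forall>e>0. \<exists>N. \<forall>m\<ge>N. \<forall>n\<ge>N. nv (z m - z n) < e"
  proof (intro allI impI)
    fix e :: real assume "e > 0"
    then obtain N where N: "t ^ Suc N < e" using arch by blast
    have "nv (z m - z n) < e" if "m \<ge> N" "n \<ge> N" for m n
    proof (cases "n \<le> m")
      case True
      have "t ^ Suc n \<le> t ^ Suc N" using that t0 power_decreasing[of "Suc N" "Suc n" t] by simp
      then show ?thesis using C[OF True] N by simp
    next
      case False
      have "t ^ Suc m \<le> t ^ Suc N" using that t0 power_decreasing[of "Suc N" "Suc m" t] by simp
      then show ?thesis using C[of m n] False N nv_sym[of "z m" "z n"] by simp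
    qed
    then show "\<exists>N. \<forall>m\<ge>N. \<forall>n\<ge>N. nv (z m - z n) < e" by blast
  qed
  obtain L where L: "\<forall>e>0. \<exists>N. \<forall>n\<ge>N. nv (z n - L) < e"
    using nv_complete[OF cauchy] by blast
  have "L^2 = -3"
  proof (rule ccontr)
    assume "L^2 \<noteq> -3"
    then have "L^2 + 3 \<noteq> 0" by (simp add: eq_neg_iff_add_eq_0)
    then have ep: "nv (L^2 + 3) > 0" using nv_nonneg nv_zero by (simp add: order_less_le)
    define \<epsilon> where "\<epsilon> = min (nv (L^2 + 3)) 1"
    have "\<epsilon> > 0" using ep by (simp add: \<epsilon>_def)
    then obtain N1 where N1: "\<forall>n\<ge>N1. nv (z n - L) < \<epsilon>" using L by blast
    obtain N2 where N2: "t ^ Suc N2 < nv (L^2 + 3)" using arch ep by blast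
    define n where "n = max N1 N2"
    have a: "nv (z n - L) < \<epsilon>" using N1 by (simp add: n_def)
    have "t ^ Suc n \<le> t ^ Suc N2" using t0 power_decreasing[of "Suc N2" "Suc n" t] by (simp add: n_def)
    then have b: "nv (z n ^2 + 3) < nv (L^2 + 3)" using P[of n] N2 by simp
    have "nv (2 * z n) = 1" using nv_mult n2 z1 by simp
    moreover have "nv (z n - L) \<le> 1" using a by (simp add: \<epsilon>_def)
    ultimately have "nv (2 * z n - (z n - L)) \<le> 1" using nv_diff_le[of "2 * z n" 1 "z n - L"] by simp
    moreover have "2 * z n - (z n - L) = z n + L" by simp
    ultimately have c: "nv (z n + L) \<le> 1" by simp
    have "nv ((z n - L) * (z n + L)) \<le> nv (z n - L)"
      using c nv_mult nv_nonneg[of "z n - L"] by (simp add: mult_left_le)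
    then have d: "nv ((z n - L) * (z n + L)) < nv (L^2 + 3)" using a by (simp add: \<epsilon>_def)
    have "nv ((z n ^2 + 3) - (z n - L) * (z n + L)) < nv (L^2 + 3)"
      using b d by (rule nv_diff_less)
    moreover have "(z n ^2 + 3) - (z n - L) * (z n + L) = L^2 + 3"
      by (simp add: algebra_simps power2_eq_square)
    ultimately show False by simp
  qed
  then show ?thesis by blast
qed

lemma nv_mult_le1: "nv u \<le> 1 \<Longrightarrow> nv v \<le> e \<Longrightarrow> nv (u * v) \<le> e"
  using nv_mult[of u v] mult_left_le_one_le[of "nv v" "nv u"] nv_nonneg[of u] nv_nonneg[of v]
  by (simp add: mult.commute)

end

lemma iter_inv:
  assumes "\<forall>y\<in>S. f y \<in> S" "x \<in> S"
  shows "(f ^^ n) x \<in> S"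
  using assms by (induction n) auto

theorem lemma4p5:
  fixes p :: nat and nv :: "'a::field_char_0 \<Rightarrow> real" and a s xs :: 'a
  assumes "prime p" and "p \<noteq> 3"
    and "is_Qp p nv"
    and "nv a < 1"
    and "s ^ 2 = a ^ 2 + 4"
    and "xs = (- a + s) / 2 \<or> xs = (- a - s) / 2"
  shows "(SI nv (\<lambda>x. x ^ 3 + a * x ^ 2) xs = pball nv 1 xs
            \<longleftrightarrow> (\<exists>\<gamma>. nv \<gamma> = 1 \<and> nv (\<gamma> ^ 2 + 3 * xs * \<gamma> + 3) < 1))
       \<and> ((\<exists>\<gamma>. nv \<gamma> = 1 \<and> nv (\<gamma> ^ 2 + 3 * xs * \<gamma> + 3) < 1)
            \<longleftrightarrow> (\<exists>y::'a. y ^ 2 = - 3))"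
proof -
  note pr = assms(1) and p3 = assms(2) and Q = assms(3) and ha = assms(4)
  have hx: "xs^2 + a*xs = 1"
  proof -
    have "(2*xs + a)^2 = s^2" using assms(6)
    proof
      assume "xs = (- a + s) / 2"
      then have "2*xs + a = s" by (simp add: field_simps)
      then show ?thesis by simp
    next
      assume "xs = (- a - s) / 2"
      then have "s + xs * 2 = - a" by (simp add: field_simps)
      then have "2*xs + a = - s" by (simp add: eq_neg_iff_add_eq_0 algebra_simps)
      then show ?thesis by simp
    qed
    then have "(2*xs + a)^2 = a^2 + 4" using assms(5) by simp
    then have "4 * (xs^2 + a*xs) = 4 * 1" by (simp add: algebra_simps power2_eq_square)
    then show ?thesis by (rule mult_left_cancel[THEN iffD1, rotated]) simp
  qed
  have p2g: "p \<ge> 2" using prime_ge_2_nat[OF pr] .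
  have n3: "nv (3::'a) = 1"
  proof -
    have "\<not> int p dvd 3"
    proof
      assume "int p dvd 3"
      then have "p dvd 3" by (metis int_dvd_int_iff of_nat_numeral)
      then have "p \<le> 3" by (simp add: dvd_imp_le)
      then have "p = 2" using p2g p3 by simp
      then show False using \<open>p dvd 3\<close> by simp
    qed
    then show ?thesis using nv_int_unit[OF Q pr, of 3] by simp
  qed
  have n2: "nv (2::'a) = 1" if "p \<noteq> 2"
  proof -
    have "\<not> int p dvd 2"
    proof
      assume "int p dvd 2"
      then have "p dvd 2" by (metis int_dvd_int_iff of_nat_numeral)
      then have "p \<le> 2" by (simp add: dvd_imp_le)
      then show False using p2g that by simp
    qed
    then show ?thesis using nv_int_unit[OF Q pr, of 2] by simp
  qed
  have xs1: "nv xs \<le> 1"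
  proof (rule ccontr)
    assume "\<not> nv xs \<le> 1"
    then have g: "nv xs > 1" by simp
    have "nv (a * xs) < nv xs" using ha g nv_mult[OF Q, of a xs] by (simp add: mult_less_cancel_right1)
    also have "nv xs < nv (xs^2)" using g nv_power[OF Q, of xs 2] by (simp add: power2_eq_square)
    finally have "nv (xs^2 + a*xs) = nv (xs^2)" using nv_strict'[OF Q] by blast
    then have "nv (xs^2) = 1" using hx nv_1[OF Q] by simp
    moreover have "1 < nv xs * nv xs" using less_1_mult[OF g g] .
    ultimately show False using nv_power[OF Q, of xs 2] by (simp add: power2_eq_square)
  qed
  have xs_eq1: "nv xs = 1"
  proof -
    have "nv (xs + a) \<le> 1" using xs1 ha nv_add_le[OF Q, of xs 1 a] by simp
    moreover have "nv xs * nv (xs + a) = 1"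
      using hx nv_mult[OF Q, of xs "xs + a"] nv_1[OF Q] by (simp add: algebra_simps power2_eq_square)
    ultimately have "nv xs \<ge> 1" using mult_left_mono[of "nv (xs + a)" 1 "nv xs"] nv_nonneg[OF Q, of xs]
      by simp
    then show ?thesis using xs1 by simp
  qed
  define f where "f = (\<lambda>x::'a. x^3 + a*x^2)"
  define K where "K = (\<lambda>h::'a. h^2 + 3*xs*h + 3)"
  define G where "G = (\<lambda>h::'a. K h + a*(h - xs))"
  define II where "II = (\<exists>\<gamma>. nv \<gamma> = 1 \<and> nv (\<gamma> ^ 2 + 3 * xs * \<gamma> + 3) < 1)"
  have fxs: "f xs = xs"
  proof -
    have "f xs = xs * (xs^2 + a*xs)" unfolding f_def by (simp add: algebra_simps power2_eq_square power3_eq_cube)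
    then show ?thesis using hx by simp
  qed
  have key: "f x - xs = (x - xs) * G (x - xs)" for x
  proof -
    have "f x - xs - (x - xs) * G (x - xs) = (xs^2 + a*xs - 1) * (xs + 3*(x - xs))"
      unfolding f_def G_def K_def by (simp add: algebra_simps power2_eq_square power3_eq_cube)
    then show ?thesis using hx by simp
  qed
  have aterm: "nv (a * (h - xs)) < 1" if "nv h \<le> 1" for h
  proof -
    have "nv (h - xs) \<le> 1" using nv_diff_le[OF Q] that xs1 by blast
    then have "nv a * nv (h - xs) \<le> nv a" using mult_left_le nv_nonneg[OF Q, of a] by blast
    then show ?thesis using nv_mult[OF Q, of a "h - xs"] ha by simp
  qed
  have Ksmall: "nv (K h) = 1" if "nv h < 1" for h
  proof -
    have "nv h * nv h \<le> nv h" using mult_left_le[of "nv h" "nv h"] that nv_nonneg[OF Q, of h] by simp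
    then have "nv (h^2) < 1" using that nv_power[OF Q, of h 2]
      by (simp add: power2_eq_square)
    moreover have "nv (3*xs*h) < 1"
    proof -
      have "nv (3*xs*h) = nv xs * nv h" using nv_mult[OF Q] n3 by simp
      also have "\<dots> \<le> nv h" using mult_right_le_one_le[of "nv h" "nv xs"] xs1 nv_nonneg[OF Q]
        by (simp add: mult.commute mult_left_le)
      finally show ?thesis using that by simp
    qed
    ultimately have "nv (h^2 + 3*xs*h) < nv 3" using nv_add_less[OF Q] n3 by simp
    then have "nv ((h^2 + 3*xs*h) + 3) = 1" using nv_strict[OF Q] n3 by simp
    then show ?thesis unfolding K_def by simp
  qed
  have Kle: "nv (K h) \<le> 1" if "nv h \<le> 1" for h
  proof -
    have "nv (h^2) \<le> 1" using that nv_power[OF Q, of h 2] nv_nonneg[OF Q, of h]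
      by (simp add: power2_eq_square mult_le_one)
    moreover have "nv (3*xs*h) \<le> 1"
      using nv_mult[OF Q] n3 xs1 that nv_nonneg[OF Q] by (simp add: mult_le_one)
    ultimately show ?thesis unfolding K_def using n3 nv_add_le[OF Q] by simp
  qed
  have Gunit: "nv (G h) = 1" if "nv h \<le> 1" "nv (K h) = 1" for h
    unfolding G_def using nv_strict'[OF Q, of "a * (h - xs)" "K h"] aterm[OF that(1)] that(2) by simp
  have Gbad: "nv (G h) < 1" if "nv h \<le> 1" "nv (K h) < 1" for h
    unfolding G_def using nv_add_less[OF Q] aterm[OF that(1)] that(2) by simp
  have fnorm: "nv (f x - xs) = nv (x - xs) * nv (G (x - xs))" for x
    using key nv_mult[OF Q] by simp
  have inv_small: "nv (f x - xs) = nv (x - xs)" if "nv (x - xs) < 1" for x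
    using fnorm[of x] Gunit[of "x - xs"] Ksmall[OF that] that by simp
  have inv_one: "nv (f x - xs) = 1" if "\<not> II" "nv (x - xs) = 1" for x
  proof -
    have "\<not> nv (K (x - xs)) < 1" using that unfolding II_def K_def by blast
    then have "nv (K (x - xs)) = 1" using Kle[of "x - xs"] that(2) by simp
    then show ?thesis using fnorm[of x] Gunit[of "x - xs"] that(2) by simp
  qed
  have sd1: "siegel_disc nv f xs 1"
    unfolding siegel_disc_def
  proof (intro conjI allI impI ballI)
    show "f xs = xs" by (rule fxs)
  next
    fix \<rho> :: real and x and n :: nat
    assume r: "\<rho> < 1" and x: "x \<in> psphere nv \<rho> xs" and "1 \<le> n"
    have "\<forall>y\<in>psphere nv \<rho> xs. f y \<in> psphere nv \<rho> xs"
    proof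
      fix y assume "y \<in> psphere nv \<rho> xs"
      then have yr: "nv (y - xs) = \<rho>" unfolding psphere_def by simp
      then have "nv (f y - xs) = \<rho>" using inv_small[of y] r by simp
      then show "f y \<in> psphere nv \<rho> xs" unfolding psphere_def by simp
    qed
    then show "(f ^^ n) x \<in> psphere nv \<rho> xs" by (rule iter_inv[OF _ x])
  qed
  have part1: "SI nv f xs = pball nv 1 xs \<longleftrightarrow> II"
  proof
    assume SI: "SI nv f xs = pball nv 1 xs"
    show II
    proof (rule ccontr)
      assume nII: "\<not> II"
      have sdp: "siegel_disc nv f xs (real p)"
        unfolding siegel_disc_def
      proof (intro conjI allI impI ballI)
        show "f xs = xs" by (rule fxs)
      next
        fix \<rho> :: real and x and n :: nat
        assume r: "\<rho> < real p" and x: "x \<in> psphere nv \<rho> xs" and "1 \<le> n"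
        have xr: "nv (x - xs) = \<rho>" using x unfolding psphere_def by simp
        have "\<rho> \<le> 1"
        proof (rule ccontr)
          assume "\<not> \<rho> \<le> 1"
          then show False using nv_gap[OF Q pr, of "x - xs"] xr r by simp
        qed
        have "\<forall>y\<in>psphere nv \<rho> xs. f y \<in> psphere nv \<rho> xs"
        proof
          fix y assume "y \<in> psphere nv \<rho> xs"
          then have yr: "nv (y - xs) = \<rho>" unfolding psphere_def by simp
          show "f y \<in> psphere nv \<rho> xs"
          proof (cases "\<rho> < 1")
            case True then show ?thesis using inv_small[of y] yr unfolding psphere_def by simp
          next
            case False then have "\<rho> = 1" using \<open>\<rho> \<le> 1\<close> by simp
            then show ?thesis using inv_one[OF nII, of y] yr unfolding psphere_def by simp
          qed
        qed
        then show "(f ^^ n) x \<in> psphere nv \<rho> xs" by (rule iter_inv[OF _ x])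
      qed
      have "xs + 1 \<in> pball nv (real p) xs" unfolding pball_def using nv_1[OF Q] p2g by simp
      then have "xs + 1 \<in> SI nv f xs" unfolding SI_def using sdp by blast
      then have "xs + 1 \<in> pball nv 1 xs" using SI by simp
      then show False unfolding pball_def using nv_1[OF Q] by simp
    qed
  next
    assume II
    then obtain \<gamma> where g1: "nv \<gamma> = 1" and gK: "nv (K \<gamma>) < 1" unfolding II_def K_def by blast
    show "SI nv f xs = pball nv 1 xs"
    proof
      show "pball nv 1 xs \<subseteq> SI nv f xs" unfolding SI_def using sd1 by blast
    next
      show "SI nv f xs \<subseteq> pball nv 1 xs"
      proof
        fix x assume "x \<in> SI nv f xs"
        then obtain r where sd: "siegel_disc nv f xs r" and xr: "x \<in> pball nv r xs"
          unfolding SI_def by blast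
        show "x \<in> pball nv 1 xs"
        proof (cases "r \<le> 1")
          case True then show ?thesis using xr unfolding pball_def by simp
        next
          case False
          have "xs + \<gamma> \<in> psphere nv 1 xs" unfolding psphere_def using g1 by simp
          moreover have "\<forall>x\<in>psphere nv 1 xs. \<forall>n\<ge>1. (f ^^ n) x \<in> psphere nv 1 xs"
            using sd False unfolding siegel_disc_def by simp
          ultimately have "(f ^^ 1) (xs + \<gamma>) \<in> psphere nv 1 xs" by blast
          then have "nv (f (xs + \<gamma>) - xs) = 1" unfolding psphere_def by simp
          moreover have "nv (f (xs + \<gamma>) - xs) < 1"
            using fnorm[of "xs + \<gamma>"] g1 Gbad[of \<gamma>] gK by simp
          ultimately show ?thesis by simp
        qed
      qed
    qed
  qed
  have ident: "(2*\<gamma> + 3*xs)^2 + 3 = 4 * K \<gamma> - 9 * (a * xs)" for \<gamma>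
  proof -
    have "(2*\<gamma> + 3*xs)^2 + 3 - (4 * K \<gamma> - 9 * (a * xs)) = 9 * (xs^2 + a*xs - 1)"
      unfolding K_def by (simp add: algebra_simps power2_eq_square)
    then show ?thesis using hx by simp
  qed
  have part2: "II \<longleftrightarrow> (\<exists>y::'a. y ^ 2 = - 3)"
  proof (cases "p = 2")
    case False
    have n2': "nv (2::'a) = 1" using n2[OF False] .
    have n4: "nv (4::'a) = 1" using nv_mult[OF Q, of 2 2] n2' by simp
    have n9: "nv (9::'a) = 1" using nv_mult[OF Q, of 3 3] n3 by simp
    have n9a: "nv (9 * (a * xs)) = nv a" using nv_mult[OF Q] n9 xs_eq1 by simp
    show ?thesis
    proof
      assume II
      then obtain \<gamma> where g1: "nv \<gamma> = 1" and gK: "nv (K \<gamma>) < 1" unfolding II_def K_def by blast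
      have "nv (4 * K \<gamma>) < 1" using nv_mult[OF Q] n4 gK by simp
      moreover have "nv (9 * (a * xs)) < 1" using n9a ha by simp
      ultimately have "nv (4 * K \<gamma> - 9 * (a * xs)) < 1" by (rule nv_diff_less[OF Q])
      then have "nv ((2*\<gamma> + 3*xs)^2 + 3) < 1" using ident by simp
      then show "\<exists>y::'a. y ^ 2 = - 3" by (rule hensel[OF Q n2' n3])
    next
      assume "\<exists>y::'a. y ^ 2 = - 3"
      then obtain y :: 'a where y: "y^2 = -3" by blast
      define \<gamma> where "\<gamma> = (y - 3*xs) / 2"
      have "2*\<gamma> = y - 3*xs" unfolding \<gamma>_def by simp
      then have "2*\<gamma> + 3*xs = y" by simp
      then have "4 * K \<gamma> - 9 * (a * xs) = 0" using ident[of \<gamma>] y by simp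
      then have "4 * K \<gamma> = 9 * (a * xs)" by simp
      then have "nv (4 * K \<gamma>) = nv a" using n9a by simp
      then have gK: "nv (K \<gamma>) < 1" using nv_mult[OF Q] n4 ha by simp
      have g1: "nv \<gamma> = 1"
      proof (rule ccontr)
        assume ne: "nv \<gamma> \<noteq> 1"
        show False
        proof (cases "nv \<gamma> < 1")
          case True then show False using Ksmall[OF True] gK by simp
        next
          case False
          then have g: "nv \<gamma> > 1" using ne by simp
          have "nv (3*xs*\<gamma>) = nv \<gamma>" using nv_mult[OF Q] n3 xs_eq1 by simp
          then have "nv (3*xs*\<gamma> + 3) \<le> nv \<gamma>" using nv_add_le[OF Q, of "3*xs*\<gamma>" "nv \<gamma>" 3] n3 g by simp
          also have "nv \<gamma> < nv (\<gamma>^2)"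
            using nv_power[OF Q, of \<gamma> 2] g by (simp add: power2_eq_square)
          finally have "nv (3*xs*\<gamma> + 3 + \<gamma>^2) = nv (\<gamma>^2)" by (rule nv_strict[OF Q])
          moreover have "3*xs*\<gamma> + 3 + \<gamma>^2 = K \<gamma>" unfolding K_def by (simp add: algebra_simps)
          moreover have "1 < nv (\<gamma>^2)"
            using nv_power[OF Q, of \<gamma> 2] less_1_mult[OF g g] by (simp add: power2_eq_square)
          ultimately show False using gK by simp
        qed
      qed
      show II unfolding II_def using g1 gK unfolding K_def by blast
    qed
  next
    case True
    have two: "nv (2::'a) = 1/2" using nv_two[OF Q True] .
    have unit_odd: "odd m" if "nv u = 1" "nv (u - of_int m) \<le> 1/8" for u m
    proof (rule ccontr)
      assume "\<not> odd m"
      then have "nv (of_int m :: 'a) \<le> 1/2" using nv_even2[OF Q True] by simp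
      moreover have "nv (u - of_int m) \<le> 1/2" using that(2) by simp
      ultimately have "nv ((u - of_int m) + of_int m) \<le> 1/2" using nv_add_le[OF Q] by blast
      then show False using that(1) by simp
    qed
    have nII: "\<not> II"
    proof
      assume II
      then obtain \<gamma> where g1: "nv \<gamma> = 1" and gK: "nv (K \<gamma>) < 1" unfolding II_def K_def by blast
      obtain g where g: "nv (\<gamma> - of_int g) \<le> 1/8" using approx2[OF Q True, of \<gamma>] g1 by auto
      obtain c where c: "nv (xs - of_int c) \<le> 1/8" using approx2[OF Q True, of xs] xs1 by auto
      have go: "odd g" using unit_odd[OF g1 g] .
      have co: "odd c" using unit_odd[OF xs_eq1 c] .
      define R where "R = (\<gamma> - of_int g) * (\<gamma> + of_int g) + 3 * (xs * (\<gamma> - of_int g) + of_int g * (xs - of_int c))"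
      have KR: "K \<gamma> = R + of_int (g*g + 3*c*g + 3)"
        unfolding K_def R_def by (simp add: algebra_simps power2_eq_square)
      have gle: "nv (of_int g :: 'a) \<le> 1" by (rule nv_of_int_le[OF Q])
      have "nv (\<gamma> + of_int g) \<le> 1" using g1 gle nv_add_le[OF Q] by simp
      then have r1: "nv ((\<gamma> - of_int g) * (\<gamma> + of_int g)) \<le> 1/8"
        using nv_mult_le1[OF Q, of "\<gamma> + of_int g" "\<gamma> - of_int g" "1/8"] g by (simp add: mult.commute)
      have r2: "nv (xs * (\<gamma> - of_int g)) \<le> 1/8" using nv_mult_le1[OF Q] xs1 g by blast
      have r3: "nv (of_int g * (xs - of_int c)) \<le> 1/8" using nv_mult_le1[OF Q] gle c by blast
      have "nv (xs * (\<gamma> - of_int g) + of_int g * (xs - of_int c)) \<le> 1/8"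
        using r2 r3 nv_add_le[OF Q] by blast
      then have "nv (3 * (xs * (\<gamma> - of_int g) + of_int g * (xs - of_int c))) \<le> 1/8"
        using nv_mult[OF Q, of 3 "xs * (\<gamma> - of_int g) + of_int g * (xs - of_int c)"] n3
        by (simp del: distrib_left distrib_right)
      then have "nv R \<le> 1/8" unfolding R_def using r1 nv_add_le[OF Q] by blast
      moreover have "odd (g*g + 3*c*g + 3)" using go co by simp
      then have "nv (of_int (g*g + 3*c*g + 3) :: 'a) = 1" using nv_odd2[OF Q True] by blast
      ultimately have "nv (R + of_int (g*g + 3*c*g + 3)) = 1" using nv_strict[OF Q] by simp
      then show False using KR gK by simp
    qed
    have nIII: "\<not> (\<exists>y::'a. y ^ 2 = - 3)"
    proof
      assume "\<exists>y::'a. y ^ 2 = - 3"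
      then obtain y :: 'a where y: "y^2 = -3" by blast
      have "nv y ^ 2 = 1" using nv_power[OF Q, of y 2] y nv_minus[OF Q] n3 by simp
      then have y1: "nv y = 1" using nv_nonneg[OF Q, of y] by (simp add: power2_eq_1_iff)
      obtain m where m: "nv (y - of_int m) \<le> 1/8" using approx2[OF Q True, of y] y1 by auto
      have mo: "odd m" using unit_odd[OF y1 m] .
      then obtain k where k: "m = 2*k + 1" by (metis oddE)
      define e where "e = y - of_int m"
      have ye: "y^2 + 3 = 4 * of_int (k*k + k + 1) + (2 * of_int m * e + e^2)"
        unfolding e_def k by (simp add: algebra_simps power2_eq_square)
      have ko: "odd (k*k + k + 1)" by simp
      have n4: "nv (4::'a) = 1/4" using nv_mult[OF Q, of 2 2] two by simp
      have A: "nv (4 * of_int (k*k + k + 1) :: 'a) = 1/4"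
      proof -
        have "nv (4 * of_int (k*k + k + 1) :: 'a) = nv (4::'a) * nv (of_int (k*k + k + 1) :: 'a)"
          by (rule nv_mult[OF Q])
        also have "\<dots> = 1/4" using n4 nv_odd2[OF Q True ko] by simp
        finally show ?thesis .
      qed
      have "nv (2 * of_int m * e) \<le> 1/16"
      proof -
        have eqn: "nv (2 * of_int m * e) = 1/2 * (nv (of_int m :: 'a) * nv e)" using nv_mult[OF Q] two by simp
        have "nv (of_int m :: 'a) * nv e \<le> 1/8"
          using mult_left_le_one_le[of "nv e" "nv (of_int m :: 'a)"] nv_nonneg[OF Q] nv_of_int_le[OF Q, of m] m
          unfolding e_def by simp
        then show ?thesis using eqn by linarith
      qed
      moreover have "nv (e^2) \<le> 1/16"
      proof -
        have "nv e \<le> 1/8" using m unfolding e_def .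
        then have "nv e * nv e \<le> 1/8 * (1/8)" using mult_mono[of "nv e" "1/8" "nv e" "1/8"] nv_nonneg[OF Q, of e] by simp
        then show ?thesis using nv_power[OF Q, of e 2] by (simp add: power2_eq_square)
      qed
      ultimately have "nv (2 * of_int m * e + e^2) \<le> 1/16" using nv_add_le[OF Q] by blast
      then have "nv (2 * of_int m * e + e^2) < nv (4 * of_int (k*k + k + 1) :: 'a)" using A by simp
      then have "nv (4 * of_int (k*k + k + 1) + (2 * of_int m * e + e^2)) = 1/4"
        using nv_strict'[OF Q] A by simp
      then show False using ye y nv_0[OF Q] by simp
    qed
    show ?thesis using nII nIII by simp
  qed
  show ?thesis using part1 part2 unfolding II_def f_def by simp
qed

end
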